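(* Let $G$ be a $(k+1)$-critical hypergraph with $k\ge2$, and let $S\subseteq V(G)$ be a separating vertex set of $G$ with $|S|\le2$. Then $S=\{v,w\}$ consists of two distinct vertices, $S$ is independent in $G$ (i.e. $\{v,w\}\notin E(G)$), and $G\div S$ has exactly two components $H_1$ and $H_2$. Moreover, letting $G_i=G[V(H_i)\cup S]$ for $i\in\{1,2\}$, the notation can be chosen so that some $k$-coloring $\varphi_1$ of $G_1$ satisfies $\varphi_1(v)=\varphi_1(w)$, and then: (a) every $k$-coloring $\varphi$ of $G_1$ satisfies $\varphi(v)=\varphi(w)$, and every $k$-coloring $\varphi$ of $G_2$ satisfies $\varphi(v)\ne\varphi(w)$; (b) the hypergraph $G_1+vw$ obtained from $G_1$ by adding the ordinary edge $vw$ is $(k+1)$-critical; (c) the hypergraph obtained from $G_2$ by identifying $v$ and $w$ into a single new vertex is $(k+1)$-critical.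
   Context: A hypergraph is a pair $G=(V,E)$ of finite sets with $E\subseteq 2^V$ and $|e|\ge2$ for all $e\in E$ (no multiple edges). A $k$-coloring is a map $V(G)\to\{1,\dots,k\}$ such that every edge contains two vertices of different colors; $\chi$ is the chromatic number. $G$ is $(k+1)$-critical if $\chi(G)=k+1$ but $\chi(H)\le k$ for every proper subhypergraph $H$. For $X\subseteq V(G)$: $G[X]$ has vertex set $X$ and the edges of $G$ contained in $X$; $G(X)$ has vertex set $X$ and edge set $\{e\cap X: e\in E(G), |e\cap X|\ge2\}$; $G\div S=G(V(G)\setminus S)$. Components are maximal connected subhypergraphs (connected: any two vertices joined by a hyperpath, i.e. a sequence of distinct vertices and distinct edges with consecutive vertices in the intermediate edge). A set $S\subseteq V(G)$ is a separating vertex set if $G$ is the union of two induced subhypergraphs $G_1,G_2$ with $V(G_1)\cap V(G_2)=S$ and $|V(G_i)|>|S|$. Identifying $v$ and $w$ in $G_2$ means replacing them by a new vertex $v^*$ and replacing each edge $e$ meeting $\{v,w\}$ by $(e\setminus\{v,w\})\cup\{v^*\}$. *)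

theory Defs
  imports Main
begin

type_synonym 'a hg = "'a set \<times> 'a set set"

abbreviation verts :: "'a hg \<Rightarrow> 'a set" where "verts G \<equiv> fst G"
abbreviation edges :: "'a hg \<Rightarrow> 'a set set" where "edges G \<equiv> snd G"

definition hypergraph :: "'a hg \<Rightarrow> bool" where
  "hypergraph G \<longleftrightarrow> finite (verts G) \<and> edges G \<subseteq> Pow (verts G) \<and> (\<forall>e\<in>edges G. card e \<ge> 2)"

definition coloring :: "'a hg \<Rightarrow> nat \<Rightarrow> ('a \<Rightarrow> nat) \<Rightarrow> bool" where
  "coloring G k f \<longleftrightarrow> (\<forall>x\<in>verts G. f x \<in> {1..k}) \<and>
     (\<forall>e\<in>edges G. \<exists>x\<in>e. \<exists>y\<in>e. f x \<noteq> f y)"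

definition chi :: "'a hg \<Rightarrow> nat" where
  "chi G = (LEAST k. \<exists>f. coloring G k f)"

definition subhypergraph :: "'a hg \<Rightarrow> 'a hg \<Rightarrow> bool" where
  "subhypergraph H G \<longleftrightarrow> hypergraph H \<and> verts H \<subseteq> verts G \<and> edges H \<subseteq> edges G"

text \<open>critical k G: G is (k+1)-critical.\<close>
definition critical :: "nat \<Rightarrow> 'a hg \<Rightarrow> bool" where
  "critical k G \<longleftrightarrow> hypergraph G \<and> chi G = k + 1 \<and>
     (\<forall>H. subhypergraph H G \<and> H \<noteq> G \<longrightarrow> chi H \<le> k)"

definition induced :: "'a hg \<Rightarrow> 'a set \<Rightarrow> 'a hg" where
  "induced G X = (X, {e \<in> edges G. e \<subseteq> X})"

definition restr :: "'a hg \<Rightarrow> 'a set \<Rightarrow> 'a hg" where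
  "restr G X = (X, {e \<inter> X | e. e \<in> edges G \<and> card (e \<inter> X) \<ge> 2})"

definition delete :: "'a hg \<Rightarrow> 'a set \<Rightarrow> 'a hg" where
  "delete G S = restr G (verts G - S)"

definition hyperpath :: "'a hg \<Rightarrow> 'a list \<Rightarrow> 'a set list \<Rightarrow> bool" where
  "hyperpath G xs es \<longleftrightarrow> xs \<noteq> [] \<and> distinct xs \<and> distinct es \<and>
     length es + 1 = length xs \<and> set xs \<subseteq> verts G \<and> set es \<subseteq> edges G \<and>
     (\<forall>i < length es. xs ! i \<in> es ! i \<and> xs ! Suc i \<in> es ! i)"

definition connected_hg :: "'a hg \<Rightarrow> bool" where
  "connected_hg G \<longleftrightarrow> verts G \<noteq> {} \<and>
     (\<forall>x\<in>verts G. \<forall>y\<in>verts G. \<exists>xs es. hyperpath G xs es \<and> hd xs = x \<and> last xs = y)"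

definition component :: "'a hg \<Rightarrow> 'a hg \<Rightarrow> bool" where
  "component G H \<longleftrightarrow> subhypergraph H G \<and> connected_hg H \<and>
     (\<forall>H'. subhypergraph H' G \<and> connected_hg H' \<and> verts H \<subseteq> verts H' \<and> edges H \<subseteq> edges H'
        \<longrightarrow> H' = H)"

definition separating :: "'a hg \<Rightarrow> 'a set \<Rightarrow> bool" where
  "separating G S \<longleftrightarrow> (\<exists>X1 X2. X1 \<subseteq> verts G \<and> X2 \<subseteq> verts G \<and>
     G = (X1 \<union> X2, edges (induced G X1) \<union> edges (induced G X2)) \<and>
     X1 \<inter> X2 = S \<and> card X1 > card S \<and> card X2 > card S)"

text \<open>Identifying v and w: new vertex is None, old vertices x become Some x.\<close>
definition identify :: "'a hg \<Rightarrow> 'a \<Rightarrow> 'a \<Rightarrow> 'a option hg" where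
  "identify G v w =
    (Some ` (verts G - {v, w}) \<union> {None},
     (\<lambda>e. if e \<inter> {v, w} \<noteq> {} then Some ` (e - {v, w}) \<union> {None} else Some ` e) ` edges G)"

definition add_edge :: "'a hg \<Rightarrow> 'a \<Rightarrow> 'a \<Rightarrow> 'a hg" where
  "add_edge G v w = (verts G, insert {v, w} (edges G))"

end

theory Submission
  imports Defs
begin


lemma two_elems: assumes "card e \<ge> 2" shows "\<exists>x y. x \<in> e \<and> y \<in> e \<and> x \<noteq> y"
proof -
  have "finite e" using assms card.infinite by fastforce
  then show ?thesis using assms card_le_Suc0_iff_eq[of e] by auto
qed

lemma col_mono: "coloring H j f \<Longrightarrow> j \<le> k \<Longrightarrow> coloring H k f"
  by (auto simp: coloring_def)

lemma col_sub: "coloring H0 k f \<Longrightarrow> verts H \<subseteq> verts H0 \<Longrightarrow> edges H \<subseteq> edges H0 \<Longrightarrow> coloring H k f"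
  unfolding coloring_def by blast

lemma col_exists: assumes "hypergraph H" shows "\<exists>f. coloring H (card (verts H)) f"
proof -
  have fin: "finite (verts H)" using assms by (simp add: hypergraph_def)
  obtain g where g: "bij_betw g (verts H) {0..<card (verts H)}"
    using ex_bij_betw_finite_nat[OF fin] by blast
  have "coloring H (card (verts H)) (\<lambda>x. g x + 1)"
    unfolding coloring_def
  proof (intro conjI ballI)
    fix x assume "x \<in> verts H"
    then have "g x < card (verts H)" using g by (auto simp: bij_betw_def)
    then show "g x + 1 \<in> {1..card (verts H)}" by simp
  next
    fix e assume e: "e \<in> edges H"
    then have c: "card e \<ge> 2" and sub: "e \<subseteq> verts H" using assms by (auto simp: hypergraph_def)
    then obtain x y where xy: "x \<in> e" "y \<in> e" "x \<noteq> y"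
      using two_elems by blast
    then have "g x \<noteq> g y" using g sub by (auto simp: bij_betw_def inj_on_def)
    then show "\<exists>x\<in>e. \<exists>y\<in>e. g x + 1 \<noteq> g y + 1" using xy by auto
  qed
  then show ?thesis by blast
qed

lemma chi_le: "coloring H k f \<Longrightarrow> chi H \<le> k"
  unfolding chi_def by (auto intro: Least_le)

lemma chi_col: "hypergraph H \<Longrightarrow> \<exists>f. coloring H (chi H) f"
  unfolding chi_def by (rule LeastI_ex) (use col_exists in blast)

lemma crit_nocol: "critical k G \<Longrightarrow> \<not> coloring G k f"
  using chi_le by (fastforce simp: critical_def)

lemma crit_sub: "critical k G \<Longrightarrow> subhypergraph H G \<Longrightarrow> H \<noteq> G \<Longrightarrow> \<exists>f. coloring H k f"
  using chi_col col_mono unfolding critical_def subhypergraph_def by blast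

lemma crit_intro:
  assumes "hypergraph H" "coloring H (k+1) f" "\<forall>f. \<not> coloring H k f"
    "\<forall>H'. subhypergraph H' H \<and> H' \<noteq> H \<longrightarrow> (\<exists>f. coloring H' k f)"
  shows "critical k H"
proof -
  have "chi H \<le> k+1" using chi_le assms(2) .
  moreover have "\<not> chi H \<le> k"
    using chi_col[OF assms(1)] col_mono assms(3) by blast
  ultimately have "chi H = k+1" by simp
  then show ?thesis using assms chi_le unfolding critical_def by blast
qed

lemma induced_proper:
  assumes "critical k G" "Y \<subseteq> verts G" "Y \<noteq> verts G"
  shows "\<exists>f. coloring (induced G Y) k f"
proof -
  have "subhypergraph (induced G Y) G"
    using assms unfolding subhypergraph_def hypergraph_def critical_def induced_def
    by (auto intro: finite_subset)
  moreover have "induced G Y \<noteq> G" using assms(3) by (metis fst_conv induced_def)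
  ultimately show ?thesis using crit_sub assms(1) by blast
qed

definition sw :: "nat \<Rightarrow> nat \<Rightarrow> nat \<Rightarrow> nat" where
  "sw a c x = (if x = a then c else if x = c then a else x)"

lemma inj_sw: "inj (sw a c)"
  by (auto simp: inj_def sw_def)

lemma perm2:
  fixes a b c d :: nat
  assumes "a\<in>{1..k}" "b\<in>{1..k}" "c\<in>{1..k}" "d\<in>{1..k}" "(a=b) = (c=d)"
  shows "\<exists>\<pi>. (\<forall>x\<in>{1..k}. \<pi> x \<in> {1..k}) \<and> inj_on \<pi> {1..k} \<and> \<pi> a = c \<and> \<pi> b = d"
proof -
  define p where "p = sw (sw a c b) d \<circ> sw a c"
  have A: "\<forall>x\<in>{1..k}. p x \<in> {1..k}" using assms(1-4) unfolding p_def sw_def by auto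
  have B: "inj_on p {1..k}" unfolding p_def
    by (rule inj_on_subset[OF _ subset_UNIV]) (rule inj_compose[OF inj_sw inj_sw])
  have C: "p b = d" unfolding p_def by (simp add: sw_def)
  have D: "p a = c"
  proof (cases "a = b")
    case True
    then have "d = c" using assms(5) by blast
    then show ?thesis using C True by blast
  next
    case False
    then have n: "sw a c b \<noteq> c" "d \<noteq> c" using assms(5) unfolding sw_def by auto
    have h: "sw x d c = c" if "x \<noteq> c" "d \<noteq> c" for x using that by (simp add: sw_def)
    have 1: "sw a c a = c" by (simp add: sw_def)
    have 2: "sw (sw a c b) d c = c" by (rule h[OF n])
    show ?thesis unfolding p_def by (simp only: comp_apply 1 2)
  qed
  show ?thesis using A B C D by blast
qed

lemma col_perm:
  assumes "coloring H k f" "\<forall>x\<in>{1..k}. \<pi> x \<in> {1..k}" "inj_on \<pi> {1..k}"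
    "\<forall>e\<in>edges H. e \<subseteq> verts H"
  shows "coloring H k (\<pi> \<circ> f)"
  unfolding coloring_def
proof (intro conjI ballI)
  fix x assume "x \<in> verts H" then show "(\<pi> \<circ> f) x \<in> {1..k}" using assms unfolding coloring_def by auto
next
  fix e assume e: "e \<in> edges H"
  then obtain x y where xy: "x\<in>e" "y\<in>e" "f x \<noteq> f y" using assms(1) unfolding coloring_def by blast
  have "f x \<in> {1..k}" "f y \<in> {1..k}" using xy e assms(1,4) unfolding coloring_def by blast+
  then have "\<pi> (f x) \<noteq> \<pi> (f y)" using xy(3) assms(3) unfolding inj_on_def by blast
  then show "\<exists>x\<in>e. \<exists>y\<in>e. (\<pi> \<circ> f) x \<noteq> (\<pi> \<circ> f) y" using xy by auto
qed

lemma glue: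
  assumes "verts G = Y1 \<union> Y2" "\<forall>e\<in>edges G. e \<subseteq> Y1 \<or> e \<subseteq> Y2"
    "coloring (induced G Y1) k f1" "coloring (induced G Y2) k f2" "\<forall>x\<in>Y1\<inter>Y2. f1 x = f2 x"
  shows "coloring G k (\<lambda>x. if x\<in>Y1 then f1 x else f2 x)"
  unfolding coloring_def
proof (intro conjI ballI)
  fix x assume "x \<in> verts G" then show "(if x\<in>Y1 then f1 x else f2 x) \<in> {1..k}"
    using assms unfolding coloring_def induced_def by auto
next
  fix e assume e: "e \<in> edges G"
  show "\<exists>x\<in>e. \<exists>y\<in>e. (if x\<in>Y1 then f1 x else f2 x) \<noteq> (if y\<in>Y1 then f1 y else f2 y)"
  proof (cases "e \<subseteq> Y1")
    case True
    then obtain x y where "x\<in>e" "y\<in>e" "f1 x \<noteq> f1 y" using assms(3) e unfolding coloring_def induced_def by auto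
    then show ?thesis using True by (metis subsetD)
  next
    case False
    then have "e \<subseteq> Y2" using assms(2) e by blast
    then obtain x y where xy: "x\<in>e" "y\<in>e" "f2 x \<noteq> f2 y" using assms(4) e unfolding coloring_def induced_def by auto
    have "\<forall>z\<in>e. (if z\<in>Y1 then f1 z else f2 z) = f2 z" using \<open>e \<subseteq> Y2\<close> assms(5) by auto
    then show ?thesis using xy by metis
  qed
qed

lemma glue_perm:
  assumes "verts G = Y1 \<union> Y2" "\<forall>e\<in>edges G. e \<subseteq> Y1 \<or> e \<subseteq> Y2"
    "coloring (induced G Y1) k f1" "coloring (induced G Y2) k f2" "Y1 \<inter> Y2 \<subseteq> {v,w}"
    "\<forall>x\<in>Y1\<inter>Y2. \<forall>y\<in>Y1\<inter>Y2. (f1 x = f1 y) = (f2 x = f2 y)"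
  shows "\<exists>f. coloring G k f"
proof -
  have "\<exists>\<pi>. (\<forall>x\<in>{1..k}. \<pi> x \<in> {1..k}) \<and> inj_on \<pi> {1..k} \<and> (\<forall>x\<in>Y1\<inter>Y2. \<pi> (f2 x) = f1 x)"
  proof (cases "Y1 \<inter> Y2 = {}")
    case True then show ?thesis by (intro exI[of _ id]) auto
  next
    case False
    obtain p q where pq: "p \<in> Y1\<inter>Y2" "q \<in> Y1\<inter>Y2" "Y1\<inter>Y2 \<subseteq> {p,q}"
      using False assms(5) by blast
    have r1: "\<forall>x\<in>Y1. f1 x \<in> {1..k}" using assms(3) by (simp add: coloring_def induced_def)
    have r2: "\<forall>x\<in>Y2. f2 x \<in> {1..k}" using assms(4) by (simp add: coloring_def induced_def)
    obtain \<pi> where "\<forall>x\<in>{1..k}. \<pi> x \<in> {1..k}" "inj_on \<pi> {1..k}" "\<pi> (f2 p) = f1 p" "\<pi> (f2 q) = f1 q"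
    proof -
      have v: "f2 p \<in> {1..k}" "f2 q \<in> {1..k}" "f1 p \<in> {1..k}" "f1 q \<in> {1..k}"
        using r1 r2 pq by auto
      have "(f1 p = f1 q) = (f2 p = f2 q)" using assms(6) pq(1,2) by blast
      then have "(f2 p = f2 q) = (f1 p = f1 q)" by simp
      from perm2[OF v this] show ?thesis using that by blast
    qed
    then show ?thesis using pq by (intro exI[of _ \<pi>]) auto
  qed
  then obtain \<pi> where p: "\<forall>x\<in>{1..k}. \<pi> x \<in> {1..k}" "inj_on \<pi> {1..k}" "\<forall>x\<in>Y1\<inter>Y2. \<pi> (f2 x) = f1 x"
    by blast
  have "coloring (induced G Y2) k (\<pi> \<circ> f2)"
    by (rule col_perm[OF assms(4) p(1,2)]) (auto simp: induced_def)
  from glue[OF assms(1,2,3) this] p(3) show ?thesis by auto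
qed



definition adj :: "'a hg \<Rightarrow> 'a \<Rightarrow> 'a \<Rightarrow> bool" where
  "adj G x y \<longleftrightarrow> (\<exists>e\<in>edges G. x \<in> e \<and> y \<in> e)"

definition cls :: "'a hg \<Rightarrow> 'a \<Rightarrow> 'a set" where
  "cls G x = {y. (adj G)\<^sup>*\<^sup>* x y}"

definition comp_of :: "'a hg \<Rightarrow> 'a \<Rightarrow> 'a hg" where
  "comp_of G x = (cls G x, {e\<in>edges G. e \<subseteq> cls G x})"

lemma reach_sym: "(adj G)\<^sup>*\<^sup>* x y \<Longrightarrow> (adj G)\<^sup>*\<^sup>* y x"
proof (induction rule: rtranclp_induct)
  case base then show ?case by simp
next
  case (step y z)
  have "adj G z y" using step(2) unfolding adj_def by blast
  then show ?case using step(3) by (rule converse_rtranclp_into_rtranclp)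
qed

lemma cls_eq: "y \<in> cls G x \<Longrightarrow> cls G y = cls G x"
  unfolding cls_def using reach_sym rtranclp_trans by (metis (no_types, lifting) Collect_cong mem_Collect_eq)

lemma cls_self: "x \<in> cls G x" unfolding cls_def by simp

lemma path_reach:
  assumes "hyperpath H xs es" "edges H \<subseteq> edges G"
  shows "i < length xs \<Longrightarrow> (adj G)\<^sup>*\<^sup>* (hd xs) (xs!i)"
proof (induction i)
  case 0 then show ?case using assms(1) by (simp add: hyperpath_def hd_conv_nth)
next
  case (Suc i)
  then have i: "i < length es" using assms(1) by (simp add: hyperpath_def)
  then have "es!i \<in> edges G" "xs!i \<in> es!i" "xs!Suc i \<in> es!i" using assms unfolding hyperpath_def
    by (auto dest: nth_mem)
  then have "adj G (xs!i) (xs!Suc i)" unfolding adj_def by blast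
  then show ?case using Suc by (meson Suc_lessD rtranclp.rtrancl_into_rtrancl)
qed

lemma path_reach_last:
  assumes "hyperpath H xs es" "edges H \<subseteq> edges G"
  shows "(adj G)\<^sup>*\<^sup>* (hd xs) (last xs)"
proof -
  have "xs \<noteq> []" using assms by (simp add: hyperpath_def)
  then show ?thesis using path_reach[OF assms, of "length xs - 1"] by (simp add: last_conv_nth)
qed

lemma reach_verts:
  assumes "hypergraph G" "x \<in> verts G" "(adj G)\<^sup>*\<^sup>* x y" shows "y \<in> verts G"
  using assms(3)
proof (induction rule: rtranclp_induct)
  case base then show ?case using assms(2) by simp
next
  case (step y z) then show ?case using assms(1) unfolding adj_def hypergraph_def by blast
qed

lemma path_prefix:
  assumes "hyperpath G xs es" "i < length xs"
  shows "hyperpath G (take (Suc i) xs) (take i es) \<and> hd (take (Suc i) xs) = hd xs \<and> last (take (Suc i) xs) = xs!i"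
proof -
  have l: "length es + 1 = length xs" using assms(1) by (simp add: hyperpath_def)
  have ne: "xs \<noteq> []" using assms(1) by (simp add: hyperpath_def)
  have "hyperpath G (take (Suc i) xs) (take i es)"
    unfolding hyperpath_def
  proof (intro conjI allI impI)
    show "take (Suc i) xs \<noteq> []" using ne by simp
    show "distinct (take (Suc i) xs)" using assms(1) by (simp add: hyperpath_def)
    show "distinct (take i es)" using assms(1) by (simp add: hyperpath_def)
    show "length (take i es) + 1 = length (take (Suc i) xs)" using l assms(2) by simp
    show "set (take (Suc i) xs) \<subseteq> verts G" using assms(1) unfolding hyperpath_def
      by (meson order_trans set_take_subset)
    show "set (take i es) \<subseteq> edges G" using assms(1) unfolding hyperpath_def
      by (meson order_trans set_take_subset)
    fix j assume j: "j < length (take i es)"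
    then have "j < length es" "j < i" by auto
    then show "take (Suc i) xs ! j \<in> take i es ! j"
      using assms(1) unfolding hyperpath_def by simp
  next
    fix j assume j: "j < length (take i es)"
    then have "j < length es" "j < i" by auto
    then show "take (Suc i) xs ! Suc j \<in> take i es ! j"
      using assms(1) unfolding hyperpath_def by simp
  qed
  moreover have "hd (take (Suc i) xs) = hd xs" using ne by (simp add: hd_conv_nth)
  moreover have "last (take (Suc i) xs) = xs!i" using assms(2) by (simp add: take_Suc_conv_app_nth)
  ultimately show ?thesis by blast
qed

lemma path_snoc:
  assumes "hyperpath G xs es" "z \<notin> set xs" "e \<notin> set es" "e \<in> edges G" "last xs \<in> e" "z \<in> e"
    "z \<in> verts G"
  shows "hyperpath G (xs@[z]) (es@[e])"
proof -
  have l: "length es + 1 = length xs" using assms(1) by (simp add: hyperpath_def)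
  have ne: "xs \<noteq> []" using assms(1) by (simp add: hyperpath_def)
  show ?thesis unfolding hyperpath_def
  proof (intro conjI allI impI)
    show "xs @ [z] \<noteq> []" by simp
    show "distinct (xs @ [z])" using assms(1,2) by (simp add: hyperpath_def)
    show "distinct (es @ [e])" using assms(1,3) by (simp add: hyperpath_def)
    show "length (es @ [e]) + 1 = length (xs @ [z])" using l by simp
    show "set (xs @ [z]) \<subseteq> verts G" using assms(1,7) by (simp add: hyperpath_def)
    show "set (es @ [e]) \<subseteq> edges G" using assms(1,4) by (simp add: hyperpath_def)
    have "(xs @ [z]) ! j \<in> (es @ [e]) ! j \<and> (xs @ [z]) ! Suc j \<in> (es @ [e]) ! j"
      if j: "j < length (es @ [e])" for j
    proof (cases "j < length es")
      case True
      then show ?thesis using assms(1) l unfolding hyperpath_def by (simp add: nth_append)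
    next
      case False
      then have "j = length es" using j by simp
      moreover have "xs ! length es = last xs"
      proof -
        have "length xs - 1 = length es" using l by simp
        then show ?thesis using ne by (simp add: last_conv_nth)
      qed
      ultimately show ?thesis using assms(5,6) l by (simp add: nth_append)
    qed
    then show "\<And>j. j < length (es @ [e]) \<Longrightarrow> (xs @ [z]) ! j \<in> (es @ [e]) ! j"
      "\<And>j. j < length (es @ [e]) \<Longrightarrow> (xs @ [z]) ! Suc j \<in> (es @ [e]) ! j" by auto
  qed
qed

lemma reach_path:
  assumes "hypergraph G" "x \<in> verts G" "(adj G)\<^sup>*\<^sup>* x y"
  shows "\<exists>xs es. hyperpath G xs es \<and> hd xs = x \<and> last xs = y"
  using assms(3)
proof (induction rule: rtranclp_induct)
  case base
  have "hyperpath G [x] []" using assms(2) by (simp add: hyperpath_def)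
  then show ?case by force
next
  case (step y z)
  obtain xs es where p: "hyperpath G xs es" "hd xs = x" "last xs = y" using step(3) by blast
  obtain e where e: "e \<in> edges G" "y \<in> e" "z \<in> e" using step(2) unfolding adj_def by blast
  have zV: "z \<in> verts G" using e assms(1) unfolding hypergraph_def by blast
  have l: "length es + 1 = length xs" using p(1) by (simp add: hyperpath_def)
  show ?case
  proof (cases "z \<in> set xs")
    case True
    then obtain i where i: "i < length xs" "xs!i = z" by (meson in_set_conv_nth)
    then show ?thesis using path_prefix[OF p(1) i(1)] p(2) by metis
  next
    case zn: False
    show ?thesis
    proof (cases "e \<in> set es")
      case True
      then obtain j where j: "j < length es" "es!j = e" by (meson in_set_conv_nth)
      have jl: "j < length xs" using j l by simp
      note pp = path_prefix[OF p(1) jl]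
      have "xs!j \<in> e" using p(1) j unfolding hyperpath_def by blast
      moreover have "e \<notin> set (take j es)"
      proof
        assume "e \<in> set (take j es)"
        then obtain i where "i < j" "take j es ! i = e" by (auto simp: in_set_conv_nth)
        then have "es!i = es!j" "i < length es" using j by auto
        moreover have "distinct es" using p(1) unfolding hyperpath_def by blast
        ultimately show False using nth_eq_iff_index_eq[of es i j] j \<open>i < j\<close> by simp
      qed
      moreover have "z \<notin> set (take (Suc j) xs)" using zn by (meson in_set_takeD)
      ultimately have "hyperpath G (take (Suc j) xs @ [z]) (take j es @ [e])"
        using path_snoc[of G "take (Suc j) xs" "take j es" z e] pp e zV by simp
      moreover have "hd (take (Suc j) xs @ [z]) = x"
      proof -
        have "xs \<noteq> []" using p(1) by (simp add: hyperpath_def)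
        then have "take (Suc j) xs \<noteq> []" by simp
        then show ?thesis using pp p(2) by (simp add: hd_append2)
      qed
      moreover have "last (take (Suc j) xs @ [z]) = z" by simp
      ultimately show ?thesis by blast
    next
      case False
      have "hyperpath G (xs @ [z]) (es @ [e])" using path_snoc[OF p(1) zn False e(1)] p(3) e zV by simp
      moreover have "hd (xs @ [z]) = x" using p(1,2) by (simp add: hyperpath_def)
      moreover have "last (xs @ [z]) = z" by simp
      ultimately show ?thesis by blast
    qed
  qed
qed



lemma path_in_cls:
  assumes "hyperpath G xs es"
  shows "set xs \<subseteq> cls G (hd xs) \<and> (\<forall>e\<in>set es. e \<subseteq> cls G (hd xs))"
proof -
  have l: "length es + 1 = length xs" using assms by (simp add: hyperpath_def)
  have A: "set xs \<subseteq> cls G (hd xs)"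
  proof
    fix u assume "u \<in> set xs"
    then obtain i where "i < length xs" "xs!i = u" by (meson in_set_conv_nth)
    then show "u \<in> cls G (hd xs)" using path_reach[OF assms order_refl] unfolding cls_def by auto
  qed
  have "e \<subseteq> cls G (hd xs)" if e: "e \<in> set es" for e
  proof
    fix u assume u: "u \<in> e"
    obtain i where i: "i < length es" "es!i = e" using e by (meson in_set_conv_nth)
    then have "xs!i \<in> e" "e \<in> edges G" using assms unfolding hyperpath_def by (auto dest: nth_mem)
    then have "adj G (xs!i) u" using u unfolding adj_def by blast
    moreover have "xs!i \<in> cls G (hd xs)" using A i l by (simp add: subset_iff)
    ultimately show "u \<in> cls G (hd xs)" unfolding cls_def by (simp add: rtranclp.rtrancl_into_rtrancl)
  qed
  then show ?thesis using A by blast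
qed

lemma path_comp:
  assumes "hyperpath G xs es" "hd xs = x"
  shows "hyperpath (comp_of G x) xs es"
proof -
  have c: "set xs \<subseteq> cls G x" "\<forall>e\<in>set es. e \<subseteq> cls G x" using path_in_cls[OF assms(1)] assms(2) by auto
  have h: "set es \<subseteq> edges G" using assms(1) unfolding hyperpath_def by blast
  have "set es \<subseteq> {e\<in>edges G. e \<subseteq> cls G x}" using c(2) h by blast
  then show ?thesis using assms(1) c(1) unfolding hyperpath_def comp_of_def fst_conv snd_conv by blast
qed

lemma cls_verts: "hypergraph G \<Longrightarrow> x \<in> verts G \<Longrightarrow> cls G x \<subseteq> verts G"
proof
  fix y assume "hypergraph G" "x \<in> verts G" "y \<in> cls G x"
  then show "y \<in> verts G" using reach_verts[of G x y] by (simp add: cls_def)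
qed

lemma comp_of_component:
  assumes hg: "hypergraph G" and x: "x \<in> verts G"
  shows "component G (comp_of G x)"
  unfolding component_def
proof (intro conjI allI impI)
  have cv: "cls G x \<subseteq> verts G" using cls_verts[OF hg x] .
  show "subhypergraph (comp_of G x) G"
  proof -
    have fin: "finite (cls G x)" using finite_subset[OF cv] hg by (simp add: hypergraph_def)
    have e2: "\<forall>e\<in>edges G. card e \<ge> 2" using hg by (simp add: hypergraph_def)
    have "hypergraph (comp_of G x)" unfolding hypergraph_def comp_of_def fst_conv snd_conv
      using fin e2 by blast
    moreover have "verts (comp_of G x) \<subseteq> verts G" "edges (comp_of G x) \<subseteq> edges G"
      using cv by (auto simp: comp_of_def)
    ultimately show ?thesis unfolding subhypergraph_def by blast
  qed
  show "connected_hg (comp_of G x)"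
    unfolding connected_hg_def
  proof (intro conjI ballI)
    show "verts (comp_of G x) \<noteq> {}" using cls_self[of x G] by (auto simp: comp_of_def)
    fix y z assume y: "y \<in> verts (comp_of G x)" and z: "z \<in> verts (comp_of G x)"
    then have yc: "y \<in> cls G x" "z \<in> cls G x" by (auto simp: comp_of_def)
    then have r: "(adj G)\<^sup>*\<^sup>* x y" "(adj G)\<^sup>*\<^sup>* x z" by (auto simp: cls_def)
    have "(adj G)\<^sup>*\<^sup>* y z" by (rule rtranclp_trans[OF reach_sym[OF r(1)] r(2)])
    moreover have "y \<in> verts G" using yc cv by blast
    ultimately obtain xs es where p: "hyperpath G xs es" "hd xs = y" "last xs = z"
      using reach_path[OF hg] by blast
    have "comp_of G y = comp_of G x" using cls_eq[OF yc(1)] by (simp add: comp_of_def)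
    then show "\<exists>xs es. hyperpath (comp_of G x) xs es \<and> hd xs = y \<and> last xs = z"
      using path_comp[OF p(1,2)] p(2,3) by auto
  qed
  fix H' assume H': "subhypergraph H' G \<and> connected_hg H' \<and> verts (comp_of G x) \<subseteq> verts H'
     \<and> edges (comp_of G x) \<subseteq> edges H'"
  have xH: "x \<in> verts H'" using H' cls_self[of x G] by (auto simp: comp_of_def)
  have V: "verts H' \<subseteq> cls G x"
  proof
    fix u assume "u \<in> verts H'"
    then obtain xs es where p: "hyperpath H' xs es" "hd xs = x" "last xs = u"
      using H' xH unfolding connected_hg_def by blast
    have "edges H' \<subseteq> edges G" using H' by (simp add: subhypergraph_def)
    from path_reach_last[OF p(1) this] p show "u \<in> cls G x" by (simp add: cls_def)
  qed
  have E: "edges H' \<subseteq> {e\<in>edges G. e \<subseteq> cls G x}"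
  proof
    fix e assume e: "e \<in> edges H'"
    then have "e \<in> edges G" "e \<subseteq> verts H'" using H' unfolding subhypergraph_def hypergraph_def by blast+
    then show "e \<in> {e\<in>edges G. e \<subseteq> cls G x}" using V by blast
  qed
  have V2: "verts H' = cls G x" using V H' by (auto simp: comp_of_def)
  have E2: "edges H' = {e\<in>edges G. e \<subseteq> cls G x}" using E H' by (auto simp: comp_of_def)
  show "H' = comp_of G x" using V2 E2 by (simp add: comp_of_def prod_eq_iff)
qed

lemma component_is_comp:
  assumes hg: "hypergraph G" and H: "component G H"
  shows "\<exists>x\<in>verts G. H = comp_of G x"
proof -
  have sub: "subhypergraph H G" and con: "connected_hg H" using H by (auto simp: component_def)
  obtain x where xH: "x \<in> verts H" using con unfolding connected_hg_def by blast
  have x: "x \<in> verts G" using xH sub by (auto simp: subhypergraph_def)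
  have V: "verts H \<subseteq> cls G x"
  proof
    fix u assume "u \<in> verts H"
    then obtain xs es where p: "hyperpath H xs es" "hd xs = x" "last xs = u"
      using con xH unfolding connected_hg_def by blast
    have "edges H \<subseteq> edges G" using sub by (simp add: subhypergraph_def)
    from path_reach_last[OF p(1) this] p show "u \<in> cls G x" by (simp add: cls_def)
  qed
  have E: "edges H \<subseteq> edges (comp_of G x)"
  proof
    fix e assume e: "e \<in> edges H"
    then have "e \<in> edges G" "e \<subseteq> verts H" using sub unfolding subhypergraph_def hypergraph_def by blast+
    then show "e \<in> edges (comp_of G x)" using V by (auto simp: comp_of_def)
  qed
  have V': "verts H \<subseteq> verts (comp_of G x)" using V by (simp add: comp_of_def)
  have c: "component G (comp_of G x)" by (rule comp_of_component[OF hg x])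
  then have c2: "subhypergraph (comp_of G x) G" "connected_hg (comp_of G x)" unfolding component_def by blast+
  have mx: "\<forall>H'. subhypergraph H' G \<and> connected_hg H' \<and> verts H \<subseteq> verts H' \<and> edges H \<subseteq> edges H'
        \<longrightarrow> H' = H" using H unfolding component_def by blast
  have "comp_of G x = H" using mx c2 V' E by blast
  then show ?thesis using x by blast
qed

lemma component_iff:
  "hypergraph G \<Longrightarrow> component G H \<longleftrightarrow> (\<exists>x\<in>verts G. H = comp_of G x)"
proof
  assume "hypergraph G" "component G H" then show "\<exists>x\<in>verts G. H = comp_of G x" by (rule component_is_comp)
next
  assume "hypergraph G" "\<exists>x\<in>verts G. H = comp_of G x"
  then obtain x where "x \<in> verts G" "H = comp_of G x" by blast
  then show "component G H" using comp_of_component[OF \<open>hypergraph G\<close>] by simp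
qed



definition sig :: "'a \<Rightarrow> 'a \<Rightarrow> 'a set \<Rightarrow> 'a option set" where
  "sig v w e = (if e \<inter> {v, w} \<noteq> {} then Some ` (e - {v, w}) \<union> {None} else Some ` e)"

lemma identify_eq: "identify H v w = (Some ` (verts H - {v, w}) \<union> {None}, sig v w ` edges H)"
  unfolding identify_def sig_def by simp

lemma sig_None: "None \<in> sig v w e \<longleftrightarrow> e \<inter> {v,w} \<noteq> {}"
  unfolding sig_def by auto

lemma sig_Some: "Some y \<in> sig v w e \<longleftrightarrow> y \<in> e \<and> y \<notin> {v,w}"
  unfolding sig_def by auto

lemma sig_lift:
  assumes "a \<in> sig v w e"
  shows "\<exists>x\<in>e. (if x \<in> {v,w} then \<phi> None else \<phi> (Some x)) = \<phi> a"
proof (cases a)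
  case None
  then have "e \<inter> {v,w} \<noteq> {}" using assms sig_None by metis
  then obtain x where "x \<in> e" "x \<in> {v,w}" by blast
  then show ?thesis using None by auto
next
  case (Some y)
  then have "y \<in> e" "y \<notin> {v,w}" using assms sig_Some by metis+
  then show ?thesis using Some by auto
qed

definition down :: "'a \<Rightarrow> ('a \<Rightarrow> nat) \<Rightarrow> 'a option \<Rightarrow> nat" where
  "down v \<psi> a = (case a of None \<Rightarrow> \<psi> v | Some y \<Rightarrow> \<psi> y)"

lemma sig_down:
  assumes "\<psi> v = \<psi> w" "x \<in> e"
  shows "\<exists>a\<in>sig v w e. down v \<psi> a = \<psi> x"
proof (cases "x \<in> {v,w}")
  case True
  then have "None \<in> sig v w e" using assms(2) sig_None by fastforce
  moreover have "down v \<psi> None = \<psi> x" using True assms(1) by (auto simp: down_def)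
  ultimately show ?thesis by blast
next
  case False
  then have "Some x \<in> sig v w e" using assms(2) sig_Some by fastforce
  moreover have "down v \<psi> (Some x) = \<psi> x" by (simp add: down_def)
  ultimately show ?thesis by blast
qed

lemma sig_sub: "e \<subseteq> X \<Longrightarrow> sig v w e \<subseteq> Some ` (X - {v, w}) \<union> {None}"
  unfolding sig_def by auto

lemma sig_card:
  assumes "finite e" "\<not> e \<subseteq> {v,w}" "card e \<ge> 2"
  shows "card (sig v w e) \<ge> 2"
proof (cases "e \<inter> {v,w} \<noteq> {}")
  case True
  obtain z where z: "z \<in> e" "z \<notin> {v,w}" using assms(2) by blast
  have "{Some z, None} \<subseteq> sig v w e" using True z unfolding sig_def by auto
  moreover have "finite (sig v w e)" using assms(1) unfolding sig_def by auto
  ultimately have "card {Some z, None} \<le> card (sig v w e)" by (rule card_mono[rotated])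
  then show ?thesis by simp
next
  case False
  then have "sig v w e = Some ` e" unfolding sig_def by simp
  moreover have "card (Some ` e) = card e" by (simp add: card_image)
  ultimately show ?thesis using assms(3) by simp
qed

lemma subset_pair_card:
  assumes "e \<subseteq> {v,w}" "card e \<ge> 2" shows "e = {v,w}"
proof (rule ccontr)
  assume "e \<noteq> {v,w}"
  then have "e \<subset> {v,w}" using assms(1) by blast
  then have "card e < card {v,w}" by (rule psubset_card_mono[rotated]) simp
  moreover have "card {v,w} \<le> 2" by (simp add: card_insert_le_m1)
  ultimately show False using assms(2) by simp
qed

locale twosep =
  fixes G :: "'a hg" and k :: nat and v w :: 'a and U1 U2 :: "'a set"
  assumes crit: "critical k G"
    and vw: "v \<noteq> w" "v \<in> verts G" "w \<in> verts G"
    and indep: "{v,w} \<notin> edges G"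
    and Udisj: "U1 \<inter> U2 = {}" and Uun: "U1 \<union> U2 = verts G - {v,w}"
    and U1ne: "U1 \<noteq> {}" and U2ne: "U2 \<noteq> {}"
    and esplit: "\<forall>e\<in>edges G. e \<subseteq> U1 \<union> {v,w} \<or> e \<subseteq> U2 \<union> {v,w}"
    and all1: "\<forall>\<phi>. coloring (induced G (U1 \<union> {v,w})) k \<phi> \<longrightarrow> \<phi> v = \<phi> w"
    and all2: "\<forall>\<phi>. coloring (induced G (U2 \<union> {v,w})) k \<phi> \<longrightarrow> \<phi> v \<noteq> \<phi> w"
    and ex1: "\<exists>\<phi>. coloring (induced G (U1 \<union> {v,w})) k \<phi>"
    and ex2: "\<exists>\<phi>. coloring (induced G (U2 \<union> {v,w})) k \<phi>"
begin

lemma hg: "hypergraph G" using crit by (simp add: critical_def)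
lemma finV: "finite (verts G)" using hg by (simp add: hypergraph_def)
lemma eV: "e \<in> edges G \<Longrightarrow> e \<subseteq> verts G" using hg by (auto simp: hypergraph_def)
lemma e2: "e \<in> edges G \<Longrightarrow> card e \<ge> 2" using hg by (auto simp: hypergraph_def)
lemma efin: "e \<in> edges G \<Longrightarrow> finite e" using eV finV finite_subset by blast

lemma not_in_S: "e \<in> edges G \<Longrightarrow> \<not> e \<subseteq> {v,w}"
  using subset_pair_card e2 indep by metis

lemma E1E2: "e \<in> edges G \<Longrightarrow> e \<subseteq> U1 \<union> {v,w} \<Longrightarrow> e \<subseteq> U2 \<union> {v,w} \<Longrightarrow> False"
proof -
  assume a: "e \<in> edges G" "e \<subseteq> U1 \<union> {v,w}" "e \<subseteq> U2 \<union> {v,w}"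
  then have "e \<subseteq> {v,w}" using Udisj by blast
  then show False using not_in_S a(1) by blast
qed

lemma U1V: "U1 \<subseteq> verts G" and U2V: "U2 \<subseteq> verts G" and U1S: "U1 \<inter> {v,w} = {}"
  and U2S: "U2 \<inter> {v,w} = {}"
  using Uun by blast+

end



context twosep
begin

lemma crit_add: "critical k (add_edge (induced G (U1 \<union> {v,w})) v w)"
proof -
  let ?Y1 = "U1 \<union> {v,w}" and ?Y2 = "U2 \<union> {v,w}"
  let ?E1 = "{e \<in> edges G. e \<subseteq> ?Y1}" and ?E2 = "{e \<in> edges G. e \<subseteq> ?Y2}"
  let ?K = "add_edge (induced G ?Y1) v w"
  have K: "?K = (?Y1, insert {v,w} ?E1)" by (simp add: add_edge_def induced_def)
  have Y1V: "?Y1 \<subseteq> verts G" using U1V vw by blast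
  have Y2V: "?Y2 \<subseteq> verts G" using U2V vw by blast
  obtain f1 where f1: "coloring (induced G ?Y1) k f1" using ex1 by blast
  have f1r: "\<forall>x\<in>?Y1. f1 x \<in> {1..k}" using f1 by (simp add: coloring_def induced_def)
  have hK: "hypergraph ?K"
  proof -
    have "finite ?Y1" using Y1V finV finite_subset by blast
    moreover have "insert {v,w} ?E1 \<subseteq> Pow ?Y1" by blast
    moreover have "\<forall>e\<in>insert {v,w} ?E1. card e \<ge> 2" using e2 vw(1) by auto
    ultimately show ?thesis unfolding K hypergraph_def fst_conv snd_conv by blast
  qed
  have c1: "coloring ?K (k+1) (f1(w := k+1))"
    unfolding K coloring_def fst_conv snd_conv
  proof (intro conjI ballI)
    fix x assume "x \<in> ?Y1" then show "(f1(w := k + 1)) x \<in> {1..k + 1}" using f1r by auto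
  next
    fix e assume e: "e \<in> insert {v,w} ?E1"
    then have eY: "e \<subseteq> ?Y1" by blast
    have ce: "card e \<ge> 2" using e e2 vw(1) by auto
    show "\<exists>x\<in>e. \<exists>y\<in>e. (f1(w := k + 1)) x \<noteq> (f1(w := k + 1)) y"
    proof (cases "w \<in> e")
      case True
      obtain a b where ab: "a \<in> e" "b \<in> e" "a \<noteq> b" using two_elems[OF ce] by blast
      then obtain z where z: "z \<in> e" "z \<noteq> w" by blast
      then have "f1 z \<in> {1..k}" using f1r eY by blast
      then have "(f1(w := k + 1)) z \<noteq> (f1(w := k + 1)) w" using z by auto
      then show ?thesis using z True by blast
    next
      case False
      then have "e \<in> ?E1" using e by blast
      then obtain x y where xy: "x\<in>e" "y\<in>e" "f1 x \<noteq> f1 y" using f1 unfolding coloring_def induced_def by auto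
      then show ?thesis using False by (intro bexI[of _ x] bexI[of _ y]) auto
    qed
  qed
  have nc: "\<forall>f. \<not> coloring ?K k f"
  proof (intro allI notI)
    fix f assume f: "coloring ?K k f"
    have "coloring (induced G ?Y1) k f" by (rule col_sub[OF f]) (auto simp: add_edge_def induced_def)
    then have "f v = f w" using all1 by blast
    moreover have "{v,w} \<in> edges ?K" by (simp add: add_edge_def)
    then have "\<exists>x\<in>{v,w}. \<exists>y\<in>{v,w}. f x \<noteq> f y" using f unfolding coloring_def by blast
    ultimately show False by auto
  qed
  have sub: "\<exists>f. coloring H' k f" if H': "subhypergraph H' ?K" "H' \<noteq> ?K" for H'
  proof -
    have hH': "hypergraph H'" and vH: "verts H' \<subseteq> ?Y1" and eH: "edges H' \<subseteq> insert {v,w} ?E1"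
      using H'(1) unfolding subhypergraph_def K by auto
    have eHV: "\<forall>e\<in>edges H'. e \<subseteq> verts H'" using hH' unfolding hypergraph_def by blast
    show ?thesis
    proof (cases "{v,w} \<in> edges H'")
      case False
      then have "edges H' \<subseteq> ?E1" using eH by blast
      then have "coloring H' k f1" using col_sub[OF f1] vH by (simp add: induced_def)
      then show ?thesis by blast
    next
      case vwE: True
      then have vwH: "v \<in> verts H'" "w \<in> verts H'" using eHV by blast+
      define Gs where "Gs = (verts H' \<union> U2, (edges H' - {{v,w}}) \<union> ?E2)"
      have Gs_v: "verts Gs = verts H' \<union> U2" and Gs_e: "edges Gs = (edges H' - {{v,w}}) \<union> ?E2"
        by (simp_all add: Gs_def)
      have sGs: "subhypergraph Gs G"
      proof -
        have "verts Gs \<subseteq> verts G" using vH Y1V U2V Gs_v by blast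
        moreover have "edges Gs \<subseteq> edges G" using eH Gs_e by blast
        moreover have "finite (verts Gs)" using calculation(1) finV finite_subset by blast
        moreover have "\<forall>e\<in>edges Gs. e \<subseteq> verts Gs" using eHV vwH Gs_v Gs_e by blast
        moreover have "\<forall>e\<in>edges Gs. card e \<ge> 2" using calculation(2) e2 by blast
        ultimately show ?thesis unfolding subhypergraph_def hypergraph_def by blast
      qed
      have nGs: "Gs \<noteq> G"
      proof
        assume eq: "Gs = G"
        show False
        proof (cases "verts H' = ?Y1")
          case False
          then obtain u where u: "u \<in> ?Y1" "u \<notin> verts H'" using vH by blast
          then have "u \<in> U1" using vwH by blast
          then have "u \<notin> verts Gs" using u(2) Udisj Gs_v by blast
          moreover have "u \<in> verts G" using u Y1V by blast
          ultimately show False using eq by simp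
        next
          case True
          then have "edges H' \<noteq> insert {v,w} ?E1" using H'(2) K by (metis prod_eqI fst_conv snd_conv)
          then obtain e where e: "e \<in> ?E1" "e \<notin> edges H'" using eH vwE by blast
          then have "e \<in> edges G" by blast
          then have "e \<in> edges Gs" using eq by simp
          then have "e \<in> ?E2" using e(2) Gs_e by blast
          then show False using E1E2 e(1) by blast
        qed
      qed
      obtain g where g: "coloring Gs k g" using crit_sub[OF crit sGs nGs] by blast
      have "coloring (induced G ?Y2) k g" using col_sub[OF g] vwH Gs_v Gs_e by (auto simp: induced_def)
      then have gvw: "g v \<noteq> g w" using all2 by blast
      have "coloring H' k g"
        unfolding coloring_def
      proof (intro conjI ballI)
        fix x assume "x \<in> verts H'" then show "g x \<in> {1..k}" using g Gs_v unfolding coloring_def by blast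
      next
        fix e assume e: "e \<in> edges H'"
        show "\<exists>x\<in>e. \<exists>y\<in>e. g x \<noteq> g y"
        proof (cases "e = {v,w}")
          case True then show ?thesis using gvw by blast
        next
          case False
          then have "e \<in> edges Gs" using e Gs_e by blast
          then show ?thesis using g unfolding coloring_def by blast
        qed
      qed
      then show ?thesis by blast
    qed
  qed
  show ?thesis by (rule crit_intro[OF hK c1 nc]) (use sub in blast)
qed

end



context twosep
begin

lemma crit_id: "critical k (identify (induced G (U2 \<union> {v,w})) v w)"
proof -
  let ?Y1 = "U1 \<union> {v,w}" and ?Y2 = "U2 \<union> {v,w}"
  let ?E1 = "{e \<in> edges G. e \<subseteq> ?Y1}" and ?E2 = "{e \<in> edges G. e \<subseteq> ?Y2}"
  let ?J = "identify (induced G ?Y2) v w"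
  have Y2m: "?Y2 - {v,w} = U2" using U2S by blast
  have U2m: "U2 - {v,w} = U2" using U2S by blast
  have J: "?J = (Some ` U2 \<union> {None}, sig v w ` ?E2)"
    unfolding identify_eq by (simp add: induced_def Y2m U2m)
  have Jv: "verts ?J = Some ` U2 \<union> {None}" and Je: "edges ?J = sig v w ` ?E2" using J by simp_all
  have Y1V: "?Y1 \<subseteq> verts G" using U1V vw by blast
  have Y2V: "?Y2 \<subseteq> verts G" using U2V vw by blast
  have hJ: "hypergraph ?J"
  proof -
    have "finite U2" using U2V finV finite_subset by blast
    then have "finite (verts ?J)" using Jv by simp
    moreover have "\<forall>h\<in>edges ?J. h \<subseteq> verts ?J"
    proof
      fix h assume "h \<in> edges ?J"
      then obtain e where "e \<in> ?E2" "h = sig v w e" using Je by blast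
      then show "h \<subseteq> verts ?J" using sig_sub[of e ?Y2 v w] Y2m Jv by simp
    qed
    moreover have "\<forall>h\<in>edges ?J. card h \<ge> 2"
    proof
      fix h assume "h \<in> edges ?J"
      then obtain e where e: "e \<in> ?E2" "h = sig v w e" using Je by blast
      then show "card h \<ge> 2" using sig_card[of e v w] efin not_in_S e2 by blast
    qed
    ultimately show ?thesis unfolding hypergraph_def by blast
  qed
  have lift: "coloring (induced G ?Y2) k (\<lambda>x. if x \<in> {v,w} then \<phi> None else \<phi> (Some x))"
    if phi: "coloring ?J k \<phi>" for \<phi>
    unfolding coloring_def
  proof (intro conjI ballI)
    fix x assume x: "x \<in> verts (induced G ?Y2)"
    show "(if x \<in> {v,w} then \<phi> None else \<phi> (Some x)) \<in> {1..k}"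
    proof (cases "x \<in> {v,w}")
      case True
      have "None \<in> verts ?J" using Jv by simp
      then show ?thesis using True phi unfolding coloring_def by simp
    next
      case False
      then have "x \<in> U2" using x by (simp add: induced_def)
      then have "Some x \<in> verts ?J" using Jv by simp
      then show ?thesis using False phi unfolding coloring_def by simp
    qed
  next
    fix e assume e: "e \<in> edges (induced G ?Y2)"
    then have "sig v w e \<in> edges ?J" using Je by (simp add: induced_def)
    then obtain a b where ab: "a \<in> sig v w e" "b \<in> sig v w e" "\<phi> a \<noteq> \<phi> b"
      using phi unfolding coloring_def by blast
    obtain x where "x \<in> e" "(if x \<in> {v,w} then \<phi> None else \<phi> (Some x)) = \<phi> a"
      using sig_lift[OF ab(1)] by blast
    moreover obtain y where "y \<in> e" "(if y \<in> {v,w} then \<phi> None else \<phi> (Some y)) = \<phi> b"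
      using sig_lift[OF ab(2)] by blast
    ultimately show "\<exists>x\<in>e. \<exists>y\<in>e. (if x \<in> {v,w} then \<phi> None else \<phi> (Some x)) \<noteq>
        (if y \<in> {v,w} then \<phi> None else \<phi> (Some y))" using ab(3) by metis
  qed
  have nc: "\<forall>f. \<not> coloring ?J k f"
  proof (intro allI notI)
    fix f assume "coloring ?J k f"
    from all2 lift[OF this] vw(1) show False by auto
  qed
  obtain f2 where f2: "coloring (induced G ?Y2) k f2" using ex2 by blast
  have f2r: "\<forall>x\<in>?Y2. f2 x \<in> {1..k}" using f2 by (simp add: coloring_def induced_def)
  have c1: "coloring ?J (k+1) (\<lambda>a. case a of None \<Rightarrow> k+1 | Some x \<Rightarrow> f2 x)"
    unfolding coloring_def
  proof (intro conjI ballI)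
    fix a assume "a \<in> verts ?J"
    then show "(case a of None \<Rightarrow> k+1 | Some x \<Rightarrow> f2 x) \<in> {1..k+1}" using Jv f2r by auto
  next
    fix h assume "h \<in> edges ?J"
    then obtain e where e: "e \<in> ?E2" "h = sig v w e" using Je by blast
    show "\<exists>x\<in>h. \<exists>y\<in>h. (case x of None \<Rightarrow> k+1 | Some x \<Rightarrow> f2 x) \<noteq> (case y of None \<Rightarrow> k+1 | Some x \<Rightarrow> f2 x)"
    proof (cases "e \<inter> {v,w} = {}")
      case True
      obtain x y where xy: "x\<in>e" "y\<in>e" "f2 x \<noteq> f2 y" using f2 e(1) unfolding coloring_def induced_def by auto
      then have "Some x \<in> h" "Some y \<in> h" using True e(2) sig_Some by fastforce+
      then show ?thesis using xy(3) by (intro bexI[of _ "Some x"] bexI[of _ "Some y"]) auto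
    next
      case False
      then have N: "None \<in> h" using e(2) sig_None by metis
      obtain z where z: "z \<in> e" "z \<notin> {v,w}" using not_in_S e(1) by blast
      then have S: "Some z \<in> h" using e(2) sig_Some by metis
      have "f2 z \<in> {1..k}" using z e(1) f2r by blast
      then show ?thesis using N S by (intro bexI[of _ None] bexI[of _ "Some z"]) auto
    qed
  qed
  have sub: "\<exists>f. coloring H k f" if H: "subhypergraph H ?J" "H \<noteq> ?J" for H
  proof -
    have hH: "hypergraph H" and vH: "verts H \<subseteq> verts ?J" and eH: "edges H \<subseteq> edges ?J"
      using H(1) unfolding subhypergraph_def by auto
    have eHV: "\<forall>h\<in>edges H. h \<subseteq> verts H" using hH unfolding hypergraph_def by blast
    show ?thesis
    proof (cases "None \<in> verts H")
      case False
      have "U2 \<subseteq> verts G" "U2 \<noteq> verts G" using U2V U2S vw by auto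
      then obtain f where f: "coloring (induced G U2) k f" using induced_proper[OF crit] by blast
      have "coloring H k (\<lambda>a. case a of None \<Rightarrow> 1 | Some x \<Rightarrow> f x)"
        unfolding coloring_def
      proof (intro conjI ballI)
        fix a assume a: "a \<in> verts H"
        then obtain x where "a = Some x" "x \<in> U2" using False vH Jv by auto
        then show "(case a of None \<Rightarrow> 1 | Some x \<Rightarrow> f x) \<in> {1..k}"
          using f unfolding coloring_def induced_def by auto
      next
        fix h assume h: "h \<in> edges H"
        then obtain e where e: "e \<in> ?E2" "h = sig v w e" using eH Je by blast
        have "None \<notin> h" using h eHV False by blast
        then have eS: "e \<inter> {v,w} = {}" using e(2) sig_None by metis
        then have "e \<subseteq> U2" using e(1) by blast
        then have "e \<in> edges (induced G U2)" using e(1) by (simp add: induced_def)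
        then obtain x y where xy: "x\<in>e" "y\<in>e" "f x \<noteq> f y" using f unfolding coloring_def by blast
        then have "Some x \<in> h" "Some y \<in> h" using eS e(2) sig_Some by fastforce+
        then show "\<exists>a\<in>h. \<exists>b\<in>h. (case a of None \<Rightarrow> 1 | Some x \<Rightarrow> f x) \<noteq> (case b of None \<Rightarrow> 1 | Some x \<Rightarrow> f x)"
          using xy(3) by (intro bexI[of _ "Some x"] bexI[of _ "Some y"]) auto
      qed
      then show ?thesis by blast
    next
      case NH: True
      define Gs where "Gs = (?Y1 \<union> {x\<in>U2. Some x \<in> verts H}, ?E1 \<union> {e\<in>?E2. sig v w e \<in> edges H})"
      have Gs_v: "verts Gs = ?Y1 \<union> {x\<in>U2. Some x \<in> verts H}"
        and Gs_e: "edges Gs = ?E1 \<union> {e\<in>?E2. sig v w e \<in> edges H}" by (simp_all add: Gs_def)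
      have sGs: "subhypergraph Gs G"
      proof -
        have "verts Gs \<subseteq> verts G" using Y1V U2V Gs_v by blast
        moreover have "edges Gs \<subseteq> edges G" using Gs_e by blast
        moreover have "finite (verts Gs)" using calculation(1) finV finite_subset by blast
        moreover have "\<forall>e\<in>edges Gs. e \<subseteq> verts Gs"
        proof
          fix e assume e: "e \<in> edges Gs"
          show "e \<subseteq> verts Gs"
          proof (cases "e \<in> ?E1")
            case True then show ?thesis using Gs_v by blast
          next
            case False
            then have e2': "e \<in> ?E2" "sig v w e \<in> edges H" using e Gs_e by blast+
            show ?thesis
            proof
              fix x assume x: "x \<in> e"
              show "x \<in> verts Gs"
              proof (cases "x \<in> {v,w}")
                case True then show ?thesis using Gs_v by blast
              next
                case False
                then have "x \<in> U2" using x e2'(1) by blast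
                moreover have "Some x \<in> sig v w e" using x False sig_Some by metis
                then have "Some x \<in> verts H" using e2'(2) eHV by blast
                ultimately show ?thesis using Gs_v by blast
              qed
            qed
          qed
        qed
        moreover have "\<forall>e\<in>edges Gs. card e \<ge> 2" using calculation(2) e2 by blast
        ultimately show ?thesis unfolding subhypergraph_def hypergraph_def by blast
      qed
      have nGs: "Gs \<noteq> G"
      proof
        assume eq: "Gs = G"
        show False
        proof (cases "verts H = verts ?J")
          case False
          then obtain a where a: "a \<in> verts ?J" "a \<notin> verts H" using vH by blast
          then obtain x where x: "a = Some x" "x \<in> U2" using NH Jv by auto
          then have "x \<notin> verts Gs" using a(2) Gs_v Udisj U2S by blast
          moreover have "x \<in> verts G" using x U2V by blast
          ultimately show False using eq by simp
        next
          case True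
          then have "edges H \<noteq> edges ?J" using H(2) by (metis prod_eqI)
          then obtain h where h: "h \<in> edges ?J" "h \<notin> edges H" using eH by blast
          then obtain e where e: "e \<in> ?E2" "h = sig v w e" using Je by blast
          then have "e \<in> edges Gs" using eq by simp
          then have "e \<in> ?E1" using e h(2) Gs_e by blast
          then show False using E1E2 e(1) by blast
        qed
      qed
      obtain g where g: "coloring Gs k g" using crit_sub[OF crit sGs nGs] by blast
      have "coloring (induced G ?Y1) k g" by (rule col_sub[OF g]) (auto simp: induced_def Gs_v Gs_e)
      then have gvw: "g v = g w" using all1 by blast
      have "coloring H k (down v g)"
        unfolding coloring_def
      proof (intro conjI ballI)
        fix a assume a: "a \<in> verts H"
        show "down v g a \<in> {1..k}"
        proof (cases a)
          case None
          have "v \<in> verts Gs" using Gs_v by blast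
          then show ?thesis using None g unfolding coloring_def down_def by simp
        next
          case (Some x)
          then have "x \<in> U2" using a vH Jv by auto
          then have "x \<in> verts Gs" using a Some Gs_v by blast
          then show ?thesis using Some g unfolding coloring_def down_def by simp
        qed
      next
        fix h assume h: "h \<in> edges H"
        then obtain e where e: "e \<in> ?E2" "h = sig v w e" using eH Je by blast
        then have "e \<in> edges Gs" using h Gs_e by blast
        then obtain x y where xy: "x\<in>e" "y\<in>e" "g x \<noteq> g y" using g unfolding coloring_def by blast
        obtain a where "a \<in> h" "down v g a = g x" using sig_down[OF gvw xy(1)] e(2) by blast
        moreover obtain b where "b \<in> h" "down v g b = g y" using sig_down[OF gvw xy(2)] e(2) by blast
        ultimately show "\<exists>a\<in>h. \<exists>b\<in>h. down v g a \<noteq> down v g b" using xy(3) by metis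
      qed
      then show ?thesis by blast
    qed
  qed
  show ?thesis by (rule crit_intro[OF hJ c1 nc]) (use sub in blast)
qed

end



lemma induced_mono: "coloring (induced G Y) k f \<Longrightarrow> Y' \<subseteq> Y \<Longrightarrow> coloring (induced G Y') k f"
  by (rule col_sub) (auto simp: induced_def)

lemma delete_edges: "edges (delete G S) = {e \<inter> (verts G - S) | e. e \<in> edges G \<and> card (e \<inter> (verts G - S)) \<ge> 2}"
  by (simp add: delete_def restr_def)

lemma delete_verts: "verts (delete G S) = verts G - S"
  by (simp add: delete_def restr_def)

theorem theorem8:
  fixes G :: "'a hg" and k :: nat and S :: "'a set"
  assumes "critical k G" and "k \<ge> 2"
    and "S \<subseteq> verts G" and "separating G S" and "card S \<le> 2"
  shows "\<exists>v w. v \<noteq> w \<and> S = {v, w} \<and> {v, w} \<notin> edges G \<and>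
    (\<exists>H1 H2. H1 \<noteq> H2 \<and> {H. component (delete G S) H} = {H1, H2} \<and>
      (let G1 = induced G (verts H1 \<union> S); G2 = induced G (verts H2 \<union> S) in
        (\<exists>\<phi>1. coloring G1 k \<phi>1 \<and> \<phi>1 v = \<phi>1 w) \<and>
        (\<forall>\<phi>. coloring G1 k \<phi> \<longrightarrow> \<phi> v = \<phi> w) \<and>
        (\<forall>\<phi>. coloring G2 k \<phi> \<longrightarrow> \<phi> v \<noteq> \<phi> w) \<and>
        critical k (add_edge G1 v w) \<and>
        critical k (identify G2 v w)))"
proof -
  note crit = assms(1)
  have hg: "hypergraph G" using crit by (simp add: critical_def)
  have finV: "finite (verts G)" using hg by (simp add: hypergraph_def)
  have eV: "\<And>e. e \<in> edges G \<Longrightarrow> e \<subseteq> verts G" using hg by (auto simp: hypergraph_def)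
  have e2: "\<And>e. e \<in> edges G \<Longrightarrow> card e \<ge> 2" using hg by (auto simp: hypergraph_def)
  have finS: "finite S" using assms(3) finV finite_subset by blast
  obtain X1 X2 where X: "X1 \<subseteq> verts G" "X2 \<subseteq> verts G"
    "G = (X1 \<union> X2, edges (induced G X1) \<union> edges (induced G X2))"
    "X1 \<inter> X2 = S" "card X1 > card S" "card X2 > card S"
    using assms(4) unfolding separating_def by blast
  have "fst G = fst (X1 \<union> X2, edges (induced G X1) \<union> edges (induced G X2))" by (rule arg_cong[OF X(3)])
  then have VX: "verts G = X1 \<union> X2" by (simp only: fst_conv)
  have "snd G = snd (X1 \<union> X2, edges (induced G X1) \<union> edges (induced G X2))" by (rule arg_cong[OF X(3)])
  then have EG: "edges G = edges (induced G X1) \<union> edges (induced G X2)" by (simp only: snd_conv)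
  have EX: "\<forall>e\<in>edges G. e \<subseteq> X1 \<or> e \<subseteq> X2"
  proof
    fix e assume "e \<in> edges G"
    then have "e \<in> edges (induced G X1) \<union> edges (induced G X2)" using EG by simp
    then show "e \<subseteq> X1 \<or> e \<subseteq> X2" by (auto simp: induced_def)
  qed
  have X1n: "X1 \<noteq> verts G"
  proof
    assume "X1 = verts G"
    then have "X1 \<inter> X2 = X2" using X(2) by blast
    then show False using X(4,6) by simp
  qed
  have X2n: "X2 \<noteq> verts G"
  proof
    assume "X2 = verts G"
    then have "X1 \<inter> X2 = X1" using X(1) by blast
    then show False using X(4,5) by simp
  qed
  obtain f1 where f1: "coloring (induced G X1) k f1" using induced_proper[OF crit X(1) X1n] by blast
  obtain f2 where f2: "coloring (induced G X2) k f2" using induced_proper[OF crit X(2) X2n] by blast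
  have c2: "card S = 2"
  proof (rule ccontr)
    assume "card S \<noteq> 2"
    then have "card S \<le> 1" using assms(5) by simp
    then have one: "\<forall>x\<in>S. \<forall>y\<in>S. x = y" using card_le_Suc0_iff_eq[OF finS] by simp
    obtain a where Sa: "S \<subseteq> {a, a}"
    proof (cases "S = {}")
      case True then show ?thesis using that by blast
    next
      case False then obtain a where "a \<in> S" by blast
      then have "S \<subseteq> {a, a}" using one by blast
      then show ?thesis using that by blast
    qed
    have pat: "\<forall>x\<in>X1\<inter>X2. \<forall>y\<in>X1\<inter>X2. (f1 x = f1 y) = (f2 x = f2 y)"
    proof (intro ballI)
      fix x y assume "x \<in> X1\<inter>X2" "y \<in> X1\<inter>X2"
      then have "x = y" using one X(4) by blast
      then show "(f1 x = f1 y) = (f2 x = f2 y)" by simp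
    qed
    have "X1 \<inter> X2 \<subseteq> {a, a}" using Sa X(4) by simp
    then obtain f where "coloring G k f" using glue_perm[OF VX EX f1 f2 _ pat] by blast
    then show False using crit_nocol[OF crit] by blast
  qed
  then obtain v w where S: "S = {v,w}" "v \<noteq> w" unfolding card_2_iff by blast
  have vV: "v \<in> verts G" "w \<in> verts G" using S assms(3) by auto
  have indep: "{v,w} \<notin> edges G"
  proof
    assume E: "{v,w} \<in> edges G"
    have "{v,w} \<subseteq> X1" "{v,w} \<subseteq> X2" using X(4) S by blast+
    then have "{v,w} \<in> edges (induced G X1)" "{v,w} \<in> edges (induced G X2)" using E by (simp_all add: induced_def)
    then have "\<exists>x\<in>{v,w}. \<exists>y\<in>{v,w}. f1 x \<noteq> f1 y" "\<exists>x\<in>{v,w}. \<exists>y\<in>{v,w}. f2 x \<noteq> f2 y"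
      using f1 f2 unfolding coloring_def by blast+
    then have d: "f1 v \<noteq> f1 w" "f2 v \<noteq> f2 w" by auto
    have "\<forall>x\<in>X1\<inter>X2. \<forall>y\<in>X1\<inter>X2. (f1 x = f1 y) = (f2 x = f2 y)"
      using d X(4) S by auto
    moreover have "X1 \<inter> X2 \<subseteq> {v, w}" using X(4) S by simp
    ultimately obtain f where "coloring G k f" using glue_perm[OF VX EX f1 f2] by blast
    then show False using crit_nocol[OF crit] by blast
  qed
  define V' where "V' = verts G - S"
  define G' where "G' = delete G S"
  have G'v: "verts G' = V'" unfolding G'_def V'_def by (rule delete_verts)
  have G'e0: "edges G' = {e \<inter> V' | e. e \<in> edges G \<and> card (e \<inter> V') \<ge> 2}"
    unfolding G'_def V'_def by (rule delete_edges)
  have G'e: "e' \<in> edges G' \<longleftrightarrow> (\<exists>e. e' = e \<inter> V' \<and> e \<in> edges G \<and> card (e \<inter> V') \<ge> 2)" for e'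
    unfolding G'e0 by (rule mem_Collect_eq)
  have hG': "hypergraph G'"
  proof -
    have "finite V'" using finV V'_def by simp
    moreover have "\<forall>e\<in>edges G'. e \<subseteq> V'"
    proof
      fix e' assume "e' \<in> edges G'"
      then obtain e where "e' = e \<inter> V'" unfolding G'e by blast
      then show "e' \<subseteq> V'" by simp
    qed
    moreover have "\<forall>e\<in>edges G'. card e \<ge> 2"
    proof
      fix e' assume "e' \<in> edges G'"
      then obtain e where "e' = e \<inter> V'" "card (e \<inter> V') \<ge> 2" unfolding G'e by blast
      then show "card e' \<ge> 2" by simp
    qed
    ultimately have "finite (verts G') \<and> edges G' \<subseteq> Pow (verts G') \<and> (\<forall>e\<in>edges G'. card e \<ge> 2)"
      unfolding G'v by blast
    then show ?thesis unfolding hypergraph_def .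
  qed
  define cl where "cl U \<longleftrightarrow> U \<subseteq> V' \<and> (\<forall>e\<in>edges G. e \<inter> U \<noteq> {} \<longrightarrow> e - S \<subseteq> U)" for U
  have reach_cl: "y \<in> U" if "cl U" "x \<in> U" "(adj G')\<^sup>*\<^sup>* x y" for U x y
    using that(3)
  proof (induction rule: rtranclp_induct)
    case base then show ?case using that(2) .
  next
    case (step y z)
    obtain e' where e': "e' \<in> edges G'" "y \<in> e'" "z \<in> e'" using step(2) unfolding adj_def by blast
    then obtain e where e: "e \<in> edges G" "e' = e \<inter> V'" using G'e by blast
    then have "e \<inter> U \<noteq> {}" using e'(2) step(3) by blast
    then have "e - S \<subseteq> U" using that(1) e(1) unfolding cl_def by blast
    then show ?case using e'(3) e(2) V'_def by blast
  qed
  have cls_cl: "cl (cls G' x)" if x: "x \<in> V'" for x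
    unfolding cl_def
  proof (intro conjI ballI impI)
    have xG': "x \<in> verts G'" using x G'v by simp
    have cV: "cls G' x \<subseteq> V'" using cls_verts[OF hG' xG'] G'v by simp
    then show "cls G' x \<subseteq> V'" .
    fix e assume e: "e \<in> edges G" "e \<inter> cls G' x \<noteq> {}"
    then obtain u where u: "u \<in> e" "u \<in> cls G' x" by blast
    have uV: "u \<in> V'" using u(2) cV by blast
    show "e - S \<subseteq> cls G' x"
    proof
      fix u' assume u': "u' \<in> e - S"
      show "u' \<in> cls G' x"
      proof (cases "u' = u")
        case True then show ?thesis using u by simp
      next
        case False
        have u'V: "u' \<in> V'" using u' eV[OF e(1)] unfolding V'_def by blast
        have "finite V'" using finV V'_def by simp
        then have "finite (e \<inter> V')" by simp
        moreover have "{u,u'} \<subseteq> e \<inter> V'" using u uV u' u'V by blast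
        ultimately have "card {u,u'} \<le> card (e \<inter> V')" by (rule card_mono)
        then have "card (e \<inter> V') \<ge> 2" using False by simp
        then have eE: "e \<inter> V' \<in> edges G'" using e(1) unfolding G'e by blast
        have uu: "u \<in> e \<inter> V' \<and> u' \<in> e \<inter> V'" using u(1) uV u' u'V by auto
        have "adj G' u u'" unfolding adj_def by (rule bexI[where P="\<lambda>a. u \<in> a \<and> u' \<in> a", OF uu eE])
        moreover have "(adj G')\<^sup>*\<^sup>* x u" using u(2) by (simp add: cls_def)
        ultimately have "(adj G')\<^sup>*\<^sup>* x u'" by (simp add: rtranclp.rtrancl_into_rtrancl)
        then show ?thesis by (simp add: cls_def)
      qed
    qed
  qed
  have split: "\<forall>e\<in>edges G. e \<subseteq> U \<union> S \<or> e \<subseteq> (V' - U) \<union> S" if "cl U" for U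
  proof
    fix e assume e: "e \<in> edges G"
    show "e \<subseteq> U \<union> S \<or> e \<subseteq> (V' - U) \<union> S"
    proof (cases "e \<inter> U = {}")
      case True then show ?thesis using eV[OF e] V'_def by blast
    next
      case False then have "e - S \<subseteq> U" using that e unfolding cl_def by blast
      then show ?thesis by blast
    qed
  qed
  have opp: "(f v = f w) \<noteq> (g v = g w)"
    if U: "cl U" "U \<noteq> {}" "V' - U \<noteq> {}" and f: "coloring (induced G (U \<union> S)) k f"
      and g: "coloring (induced G ((V' - U) \<union> S)) k g" for U f g
  proof
    assume pat: "(f v = f w) = (g v = g w)"
    have UV: "U \<subseteq> V'" using U(1) cl_def by blast
    have A1: "verts G = (U \<union> S) \<union> ((V' - U) \<union> S)" using UV assms(3) V'_def by blast
    have A2: "(U \<union> S) \<inter> ((V' - U) \<union> S) \<subseteq> {v,w}" using S(1) by blast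
    have A3: "\<forall>x\<in>(U \<union> S) \<inter> ((V' - U) \<union> S). \<forall>y\<in>(U \<union> S) \<inter> ((V' - U) \<union> S). (f x = f y) = (g x = g y)"
    proof (intro ballI)
      fix x y assume x: "x \<in> (U \<union> S) \<inter> ((V' - U) \<union> S)" and y: "y \<in> (U \<union> S) \<inter> ((V' - U) \<union> S)"
      then have "x \<in> {v,w}" "y \<in> {v,w}" using UV V'_def S(1) by blast+
      then show "(f x = f y) = (g x = g y)" using pat by auto
    qed
    obtain h where "coloring G k h" using glue_perm[OF A1 split[OF U(1)] f g A2 A3] by blast
    then show False using crit_nocol[OF crit] by blast
  qed
  have proper: "\<exists>f. coloring (induced G (U \<union> S)) k f" if "U \<subseteq> V'" "V' - U \<noteq> {}" for U
  proof -
    have "U \<union> S \<subseteq> verts G" "U \<union> S \<noteq> verts G" using that assms(3) V'_def by auto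
    then show ?thesis using induced_proper[OF crit] by blast
  qed
  define A where "A = X1 - S"
  define B where "B = X2 - S"
  have ABdisj: "A \<inter> B = {}" using X(4) A_def B_def by blast
  have clA: "cl A"
    unfolding cl_def
  proof (intro conjI ballI impI)
    show "A \<subseteq> V'" using X(1) A_def V'_def by blast
    fix e assume e: "e \<in> edges G" "e \<inter> A \<noteq> {}"
    have "\<not> e \<subseteq> X2" using e(2) X(4) A_def by blast
    then have "e \<subseteq> X1" using EX e(1) by blast
    then show "e - S \<subseteq> A" using A_def by blast
  qed
  have clB: "cl B"
    unfolding cl_def
  proof (intro conjI ballI impI)
    show "B \<subseteq> V'" using X(2) B_def V'_def by blast
    fix e assume e: "e \<in> edges G" "e \<inter> B \<noteq> {}"
    have "\<not> e \<subseteq> X1" using e(2) X(4) B_def by blast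
    then have "e \<subseteq> X2" using EX e(1) by blast
    then show "e - S \<subseteq> B" using B_def by blast
  qed
  have Ane: "A \<noteq> {}"
  proof
    assume "A = {}" then have "X1 \<subseteq> S" using A_def by blast
    then have "card X1 \<le> card S" using finS by (simp add: card_mono)
    then show False using X(5) by simp
  qed
  have Bne: "B \<noteq> {}"
  proof
    assume "B = {}" then have "X2 \<subseteq> S" using B_def by blast
    then have "card X2 \<le> card S" using finS by (simp add: card_mono)
    then show False using X(6) by simp
  qed
  obtain a b where a: "a \<in> A" and b: "b \<in> B" using Ane Bne by blast
  have aV: "a \<in> V'" and bV: "b \<in> V'" using a b clA clB unfolding cl_def by blast+
  define Ca where "Ca = cls G' a"
  define Cb where "Cb = cls G' b"
  have CaA: "Ca \<subseteq> A" using reach_cl[OF clA a] unfolding Ca_def cls_def by blast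
  have CbB: "Cb \<subseteq> B" using reach_cl[OF clB b] unfolding Cb_def cls_def by blast
  have aCa: "a \<in> Ca" and bCb: "b \<in> Cb" using cls_self[of a G'] cls_self[of b G'] unfolding Ca_def Cb_def by blast+
  have CaCb: "Ca \<inter> Cb = {}" using CaA CbB ABdisj by blast
  have disj: "cls G' x \<inter> cls G' y = {}" if "cls G' x \<noteq> cls G' y" for x y
  proof (rule ccontr)
    assume "cls G' x \<inter> cls G' y \<noteq> {}"
    then obtain u where "u \<in> cls G' x" "u \<in> cls G' y" by blast
    then have "cls G' u = cls G' x" "cls G' u = cls G' y" using cls_eq by (metis, metis)
    then show False using that by simp
  qed
  have clCa: "cl Ca" using cls_cl[OF aV] Ca_def by simp
  have clCb: "cl Cb" using cls_cl[OF bV] Cb_def by simp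
  have CaV: "Ca \<subseteq> V'" and CbV: "Cb \<subseteq> V'" using clCa clCb cl_def by blast+
  have only2: "cls G' z = Ca \<or> cls G' z = Cb" if z: "z \<in> V'" for z
  proof (rule ccontr)
    assume nz: "\<not> (cls G' z = Ca \<or> cls G' z = Cb)"
    define C3 where "C3 = cls G' z"
    have n1: "cls G' z \<noteq> cls G' a" using nz unfolding Ca_def by simp
    have n2: "cls G' z \<noteq> cls G' b" using nz unfolding Cb_def by simp
    have C3a: "C3 \<inter> Ca = {}" unfolding C3_def Ca_def by (rule disj[OF n1])
    have C3b: "C3 \<inter> Cb = {}" unfolding C3_def Cb_def by (rule disj[OF n2])
    have clC3: "cl C3" unfolding C3_def by (rule cls_cl[OF z])
    have C3V: "C3 \<subseteq> V'" using clC3 unfolding cl_def by (rule conjunct1)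
    have zC3: "z \<in> C3" unfolding C3_def by (rule cls_self)
    have m1: "V' - (V' - Ca) \<noteq> {}" using aCa aV by blast
    have m2: "V' - (V' - Cb) \<noteq> {}" using bCb bV by blast
    have m3: "V' - (V' - C3) \<noteq> {}" using zC3 z by blast
    obtain g1 where g1: "coloring (induced G ((V' - Ca) \<union> S)) k g1"
      using proper[OF Diff_subset m1] by blast
    obtain g2 where g2: "coloring (induced G ((V' - Cb) \<union> S)) k g2"
      using proper[OF Diff_subset m2] by blast
    obtain h where h: "coloring (induced G ((V' - C3) \<union> S)) k h"
      using proper[OF Diff_subset m3] by blast
    have s1: "C3 \<union> S \<subseteq> (V' - Ca) \<union> S" using C3a C3V by blast
    have s2: "C3 \<union> S \<subseteq> (V' - Cb) \<union> S" using C3b C3V by blast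
    have s3: "Cb \<union> S \<subseteq> (V' - Ca) \<union> S" using CaCb CbV by blast
    have g1c3: "coloring (induced G (C3 \<union> S)) k g1" by (rule induced_mono[OF g1 s1])
    have g2c3: "coloring (induced G (C3 \<union> S)) k g2" by (rule induced_mono[OF g2 s2])
    have g1cb: "coloring (induced G (Cb \<union> S)) k g1" by (rule induced_mono[OF g1 s3])
    have ne31: "C3 \<noteq> {}" using zC3 by blast
    have ne32: "V' - C3 \<noteq> {}" using aCa aV C3a by blast
    have ne3: "C3 \<noteq> {}" "V' - C3 \<noteq> {}" by (fact ne31, fact ne32)
    have neb1: "Cb \<noteq> {}" using bCb by blast
    have neb2: "V' - Cb \<noteq> {}" using aCa aV CaCb by blast
    have neb: "Cb \<noteq> {}" "V' - Cb \<noteq> {}" by (fact neb1, fact neb2)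
    have "(g1 v = g1 w) \<noteq> (h v = h w)" using opp[OF clC3 ne3 g1c3 h] .
    moreover have "(g2 v = g2 w) \<noteq> (h v = h w)" using opp[OF clC3 ne3 g2c3 h] .
    moreover have "(g1 v = g1 w) \<noteq> (g2 v = g2 w)" using opp[OF clCb neb g1cb g2] .
    ultimately show False by argo
  qed
  have VCaCb: "V' = Ca \<union> Cb"
  proof
    show "V' \<subseteq> Ca \<union> Cb"
    proof
      fix z assume z: "z \<in> V'"
      then have "z \<in> cls G' z" using cls_self[of z G'] by blast
      then show "z \<in> Ca \<union> Cb" using only2[OF z] by blast
    qed
    show "Ca \<union> Cb \<subseteq> V'" using CaV CbV by blast
  qed
  have CbE: "V' - Ca = Cb" using VCaCb CaCb by blast
  have CaE: "V' - Cb = Ca" using VCaCb CaCb by blast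
  have comps: "{H. component G' H} = {comp_of G' a, comp_of G' b}"
  proof (intro set_eqI iffI)
    fix H assume "H \<in> {H. component G' H}"
    then obtain x where x: "x \<in> V'" "H = comp_of G' x" using component_iff[OF hG'] G'v by auto
    have "cls G' x = cls G' a \<or> cls G' x = cls G' b" using only2[OF x(1)] Ca_def Cb_def by simp
    then show "H \<in> {comp_of G' a, comp_of G' b}" using x(2) by (auto simp: comp_of_def)
  next
    fix H assume "H \<in> {comp_of G' a, comp_of G' b}"
    then show "H \<in> {H. component G' H}" using component_iff[OF hG'] G'v aV bV by auto
  qed
  have vCa: "verts (comp_of G' a) = Ca" and vCb: "verts (comp_of G' b) = Cb"
    by (simp_all add: comp_of_def Ca_def Cb_def)
  have cneq: "comp_of G' a \<noteq> comp_of G' b"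
  proof
    assume "comp_of G' a = comp_of G' b"
    then have "Ca = Cb" using vCa vCb by simp
    then show False using aCa CaCb by blast
  qed
  have neCa: "Ca \<noteq> {}" "V' - Ca \<noteq> {}" using aCa bCb CbE by blast+
  have oppab: "(\<phi> v = \<phi> w) \<noteq> (\<psi> v = \<psi> w)"
    if "coloring (induced G (Ca \<union> S)) k \<phi>" "coloring (induced G (Cb \<union> S)) k \<psi>" for \<phi> \<psi>
  proof -
    have "coloring (induced G ((V' - Ca) \<union> S)) k \<psi>" using that(2) CbE by simp
    then show ?thesis using opp[OF clCa neCa that(1)] by blast
  qed
  obtain fa where fa: "coloring (induced G (Ca \<union> S)) k fa" using proper[OF CaV] neCa by blast
  obtain fb where fb: "coloring (induced G (Cb \<union> S)) k fb" using proper[OF CbV] CaE neCa(1) by blast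
  have UnS: "Ca \<union> Cb = verts G - {v,w}" using VCaCb V'_def S(1) by simp
  have splitab: "\<forall>e\<in>edges G. e \<subseteq> Ca \<union> {v,w} \<or> e \<subseteq> Cb \<union> {v,w}" using split[OF clCa] CbE S(1) by simp
  have fin: "?thesis" if ts: "twosep G k v w U1 U2" and H: "verts H1 = U1" "verts H2 = U2" "H1 \<noteq> H2"
    "{H. component G' H} = {H1, H2}" for U1 U2 H1 H2
  proof -
    have sub: "\<exists>H1 H2. H1 \<noteq> H2 \<and> {H. component (delete G S) H} = {H1, H2} \<and>
      (let G1 = induced G (verts H1 \<union> S); G2 = induced G (verts H2 \<union> S) in
        (\<exists>\<phi>1. coloring G1 k \<phi>1 \<and> \<phi>1 v = \<phi>1 w) \<and>
        (\<forall>\<phi>. coloring G1 k \<phi> \<longrightarrow> \<phi> v = \<phi> w) \<and>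
        (\<forall>\<phi>. coloring G2 k \<phi> \<longrightarrow> \<phi> v \<noteq> \<phi> w) \<and>
        critical k (add_edge G1 v w) \<and>
        critical k (identify G2 v w))"
    proof (intro exI conjI)
      show "H1 \<noteq> H2" by (rule H(3))
      show "{H. component (delete G S) H} = {H1, H2}" using H(4) G'_def by simp
      have a1: "\<forall>\<phi>. coloring (induced G (U1 \<union> {v,w})) k \<phi> \<longrightarrow> \<phi> v = \<phi> w"
        and a2: "\<forall>\<phi>. coloring (induced G (U2 \<union> {v,w})) k \<phi> \<longrightarrow> \<phi> v \<noteq> \<phi> w"
        and x1: "\<exists>\<phi>. coloring (induced G (U1 \<union> {v,w})) k \<phi>"
        using ts unfolding twosep_def by blast+
      have ca: "critical k (add_edge (induced G (U1 \<union> {v,w})) v w)" by (rule twosep.crit_add[OF ts])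
      have ci: "critical k (identify (induced G (U2 \<union> {v,w})) v w)" by (rule twosep.crit_id[OF ts])
      show "let G1 = induced G (verts H1 \<union> S); G2 = induced G (verts H2 \<union> S) in
        (\<exists>\<phi>1. coloring G1 k \<phi>1 \<and> \<phi>1 v = \<phi>1 w) \<and>
        (\<forall>\<phi>. coloring G1 k \<phi> \<longrightarrow> \<phi> v = \<phi> w) \<and>
        (\<forall>\<phi>. coloring G2 k \<phi> \<longrightarrow> \<phi> v \<noteq> \<phi> w) \<and>
        critical k (add_edge G1 v w) \<and>
        critical k (identify G2 v w)"
        unfolding Let_def H(1,2) S(1) using a1 a2 x1 ca ci by blast
    qed
    show ?thesis using sub S indep by blast
  qed
  show ?thesis
  proof (cases "fa v = fa w")
    case True
    have ts: "twosep G k v w Ca Cb"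
    proof (rule twosep.intro[OF crit S(2) vV(1) vV(2) indep CaCb UnS])
      show "Ca \<noteq> {}" "Cb \<noteq> {}" using aCa bCb by blast+
      show "\<forall>e\<in>edges G. e \<subseteq> Ca \<union> {v,w} \<or> e \<subseteq> Cb \<union> {v,w}" by (rule splitab)
      show "\<forall>\<phi>. coloring (induced G (Ca \<union> {v,w})) k \<phi> \<longrightarrow> \<phi> v = \<phi> w"
      proof (intro allI impI)
        fix \<phi> assume "coloring (induced G (Ca \<union> {v,w})) k \<phi>"
        then have "coloring (induced G (Ca \<union> S)) k \<phi>" using S(1) by simp
        from oppab[OF this fb] oppab[OF fa fb] True show "\<phi> v = \<phi> w" by blast
      qed
      show "\<forall>\<phi>. coloring (induced G (Cb \<union> {v,w})) k \<phi> \<longrightarrow> \<phi> v \<noteq> \<phi> w"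
      proof (intro allI impI)
        fix \<phi> assume "coloring (induced G (Cb \<union> {v,w})) k \<phi>"
        then have "coloring (induced G (Cb \<union> S)) k \<phi>" using S(1) by simp
        from oppab[OF fa this] True show "\<phi> v \<noteq> \<phi> w" by blast
      qed
      show "\<exists>\<phi>. coloring (induced G (Ca \<union> {v,w})) k \<phi>" using fa S(1) by blast
      show "\<exists>\<phi>. coloring (induced G (Cb \<union> {v,w})) k \<phi>" using fb S(1) by blast
    qed
    show ?thesis by (rule fin[OF ts vCa vCb cneq comps])
  next
    case False
    have ts: "twosep G k v w Cb Ca"
    proof (rule twosep.intro[OF crit S(2) vV(1) vV(2) indep])
      show "Cb \<inter> Ca = {}" using CaCb by blast
      show "Cb \<union> Ca = verts G - {v,w}" using UnS by blast
      show "Cb \<noteq> {}" "Ca \<noteq> {}" using aCa bCb by blast+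
      show "\<forall>e\<in>edges G. e \<subseteq> Cb \<union> {v,w} \<or> e \<subseteq> Ca \<union> {v,w}" using splitab by blast
      show "\<forall>\<phi>. coloring (induced G (Cb \<union> {v,w})) k \<phi> \<longrightarrow> \<phi> v = \<phi> w"
      proof (intro allI impI)
        fix \<phi> assume "coloring (induced G (Cb \<union> {v,w})) k \<phi>"
        then have "coloring (induced G (Cb \<union> S)) k \<phi>" using S(1) by simp
        from oppab[OF fa this] False show "\<phi> v = \<phi> w" by blast
      qed
      show "\<forall>\<phi>. coloring (induced G (Ca \<union> {v,w})) k \<phi> \<longrightarrow> \<phi> v \<noteq> \<phi> w"
      proof (intro allI impI)
        fix \<phi> assume "coloring (induced G (Ca \<union> {v,w})) k \<phi>"
        then have "coloring (induced G (Ca \<union> S)) k \<phi>" using S(1) by simp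
        from oppab[OF this fb] oppab[OF fa fb] False show "\<phi> v \<noteq> \<phi> w" by blast
      qed
      show "\<exists>\<phi>. coloring (induced G (Cb \<union> {v,w})) k \<phi>" using fb S(1) by blast
      show "\<exists>\<phi>. coloring (induced G (Ca \<union> {v,w})) k \<phi>" using fa S(1) by blast
    qed
    have "{H. component G' H} = {comp_of G' b, comp_of G' a}" using comps by blast
    moreover have "comp_of G' b \<noteq> comp_of G' a" using cneq by simp
    ultimately show ?thesis using fin[OF ts vCb vCa] by blast
  qed
qed


end
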